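(* Let $Q$ be a sequence, $G=(V,E,\delta)$ a pangenome graph, $k_1,k_2>0$ integers, and $H_{gap}$ the directed graph defined in the context. If $v_{(i_0,u_0,f_0)},\dots,v_{(i_k,u_k,f_k)}$ is a directed path in $H_{gap}$, then $Q_{i_0}Q_{i_1}\cdots Q_{i_k}$ is a $(k_1,k_2)$-gap common subsequence between $Q$ and $G$.
   Context: Strings are 0-indexed; $S_i$ is the character of $S$ at position $i$. A pangenome graph is a triple $G=(V,E,\delta)$ where $(V,E)$ is a finite directed graph and $\delta:V\to\Sigma^*\setminus\{\epsilon\}$ assigns to each vertex a nonempty string over an alphabet $\Sigma$. A path in $G$ is a sequence of vertices $P=w_0,\dots,w_k$ ($k\ge0$) with $(w_j,w_{j+1})\in E$ for $j<k$; $spell(P)=\delta(w_0)\cdots\delta(w_k)$. A sequence $S$ is a $(k_1,k_2)$-gap common subsequence between $Q$ and $G$ if there is a path $P$ in $G$ and indices $p_0<\dots<p_{|S|-1}$ in $Q$ and $q_0<\dots<q_{|S|-1}$ in $spell(P)$ with $Q_{p_j}=spell(P)_{q_j}=S_j$ for all $j$, $p_j-p_{j-1}\le k_1$ and $q_j-q_{j-1}\le k_2$ for all $1\le j\le|S|-1$. The directed graph $H_{gap}$ has vertex set $\{v_{(i,u,f)}: 0\le i\le|Q|-1,\ u\in V,\ 0\le f\le|\delta(u)|-1,\ Q_i=\delta(u)_f\}$, and an edge from $v_{(i,u,f)}$ to $v_{(i',u',f')}$ if and only if $0<i'-i\le k_1$ and: if $u\ne u'$, there is a path $P=w_0,\dots,w_k$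 from $u=w_0$ to $u'=w_k$ in $G$ with $0<\sum_{j=0}^{k-1}|\delta(w_j)|+f'-f\le k_2$; if $u=u'$, then $0<f'-f\le k_2$. *)

theory Defs
  imports Main
begin

definition pangenome_graph :: "'v set \<Rightarrow> ('v \<times> 'v) set \<Rightarrow> ('v \<Rightarrow> 'a list) \<Rightarrow> bool" where
  "pangenome_graph V E \<delta> \<longleftrightarrow> finite V \<and> E \<subseteq> V \<times> V \<and> (\<forall>u\<in>V. \<delta> u \<noteq> [])"

definition is_path :: "'v set \<Rightarrow> ('v \<times> 'v) set \<Rightarrow> 'v list \<Rightarrow> bool" where
  "is_path V E P \<longleftrightarrow> P \<noteq> [] \<and> set P \<subseteq> V \<and> (\<forall>j. Suc j < length P \<longrightarrow> (P ! j, P ! Suc j) \<in> E)"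

definition spell :: "('v \<Rightarrow> 'a list) \<Rightarrow> 'v list \<Rightarrow> 'a list" where
  "spell \<delta> P = concat (map \<delta> P)"

definition gap_common_subseq ::
  "nat \<Rightarrow> nat \<Rightarrow> 'a list \<Rightarrow> 'v set \<Rightarrow> ('v \<times> 'v) set \<Rightarrow> ('v \<Rightarrow> 'a list) \<Rightarrow> 'a list \<Rightarrow> bool" where
  "gap_common_subseq k1 k2 Q V E \<delta> S \<longleftrightarrow>
     (\<exists>P p q. is_path V E P \<and>
        (\<forall>j < length S. p j < length Q \<and> q j < length (spell \<delta> P)) \<and>
        (\<forall>j. Suc j < length S \<longrightarrow> p j < p (Suc j) \<and> q j < q (Suc j)) \<and>
        (\<forall>j < length S. Q ! p j = S ! j \<and> spell \<delta> P ! q j = S ! j) \<and>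
        (\<forall>j. 1 \<le> j \<and> j < length S \<longrightarrow> p j - p (j - 1) \<le> k1 \<and> q j - q (j - 1) \<le> k2))"

definition Hgap_vertex :: "'a list \<Rightarrow> 'v set \<Rightarrow> ('v \<Rightarrow> 'a list) \<Rightarrow> nat \<times> 'v \<times> nat \<Rightarrow> bool" where
  "Hgap_vertex Q V \<delta> x = (case x of (i, u, f) \<Rightarrow>
     i < length Q \<and> u \<in> V \<and> f < length (\<delta> u) \<and> Q ! i = \<delta> u ! f)"

definition Hgap_edge ::
  "nat \<Rightarrow> nat \<Rightarrow> 'a list \<Rightarrow> 'v set \<Rightarrow> ('v \<times> 'v) set \<Rightarrow> ('v \<Rightarrow> 'a list) \<Rightarrow>
   nat \<times> 'v \<times> nat \<Rightarrow> nat \<times> 'v \<times> nat \<Rightarrow> bool" where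
  "Hgap_edge k1 k2 Q V E \<delta> x y = (case x of (i, u, f) \<Rightarrow> case y of (i', u', f') \<Rightarrow>
     Hgap_vertex Q V \<delta> x \<and> Hgap_vertex Q V \<delta> y \<and>
     0 < int i' - int i \<and> int i' - int i \<le> int k1 \<and>
     (if u \<noteq> u' then
        (\<exists>P. is_path V E P \<and> hd P = u \<and> last P = u' \<and>
           0 < int (sum_list (map (\<lambda>w. length (\<delta> w)) (butlast P))) + int f' - int f \<and>
           int (sum_list (map (\<lambda>w. length (\<delta> w)) (butlast P))) + int f' - int f \<le> int k2)
      else 0 < int f' - int f \<and> int f' - int f \<le> int k2))"

definition Hgap_path ::
  "nat \<Rightarrow> nat \<Rightarrow> 'a list \<Rightarrow> 'v set \<Rightarrow> ('v \<times> 'v) set \<Rightarrow> ('v \<Rightarrow> 'a list) \<Rightarrow>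
   (nat \<times> 'v \<times> nat) list \<Rightarrow> bool" where
  "Hgap_path k1 k2 Q V E \<delta> xs \<longleftrightarrow> xs \<noteq> [] \<and> (\<forall>x\<in>set xs. Hgap_vertex Q V \<delta> x) \<and>
     (\<forall>j. Suc j < length xs \<longrightarrow> Hgap_edge k1 k2 Q V E \<delta> (xs ! j) (xs ! Suc j))"

end

theory Submission
  imports Defs
begin

lemma is_path_single: "is_path V E [a] \<longleftrightarrow> a \<in> V"
  by (simp add: is_path_def)

lemma is_path_Cons2: "is_path V E (a#b#r) \<longleftrightarrow> a \<in> V \<and> (a,b) \<in> E \<and> is_path V E (b#r)"
proof
  assume h: "is_path V E (a#b#r)"
  have "Suc 0 < length (a#b#r)" by simp
  then have "((a#b#r) ! 0, (a#b#r) ! Suc 0) \<in> E" using h unfolding is_path_def by blast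
  then have "(a,b) \<in> E" by simp
  moreover have "\<forall>j. Suc j < length (b#r) \<longrightarrow> ((b#r) ! j, (b#r) ! Suc j) \<in> E"
  proof (intro allI impI)
    fix j assume "Suc j < length (b#r)"
    then have "Suc (Suc j) < length (a#b#r)" by simp
    then have "((a#b#r) ! Suc j, (a#b#r) ! Suc (Suc j)) \<in> E" using h unfolding is_path_def by blast
    then show "((b#r) ! j, (b#r) ! Suc j) \<in> E" by simp
  qed
  ultimately show "a \<in> V \<and> (a,b) \<in> E \<and> is_path V E (b#r)" using h unfolding is_path_def by auto
next
  assume h: "a \<in> V \<and> (a,b) \<in> E \<and> is_path V E (b#r)"
  have "\<forall>j. Suc j < length (a#b#r) \<longrightarrow> ((a#b#r) ! j, (a#b#r) ! Suc j) \<in> E"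
  proof (intro allI impI)
    fix j assume j: "Suc j < length (a#b#r)"
    show "((a#b#r) ! j, (a#b#r) ! Suc j) \<in> E"
    proof (cases j)
      case 0 then show ?thesis using h by simp
    next
      case (Suc m)
      then have "Suc m < length (b#r)" using j by simp
      then have "((b#r) ! m, (b#r) ! Suc m) \<in> E" using h unfolding is_path_def by blast
      then show ?thesis using Suc by simp
    qed
  qed
  then show "is_path V E (a#b#r)" using h unfolding is_path_def by auto
qed

lemma is_path_append:
  "is_path V E A \<Longrightarrow> is_path V E B \<Longrightarrow> (last A, hd B) \<in> E \<Longrightarrow> is_path V E (A @ B)"
proof (induction A)
  case Nil then show ?case by (simp add: is_path_def)
next
  case (Cons a A)
  show ?case
  proof (cases A)
    case Nil
    then show ?thesis using Cons.prems
      by (cases B) (auto simp: is_path_Cons2 is_path_single)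
  next
    case (Cons b r)
    then have "is_path V E A" "a \<in> V" "(a,b) \<in> E" using Cons.prems(1) by (auto simp: is_path_Cons2)
    then have "is_path V E (A @ B)" using Cons.IH Cons.prems \<open>A = b#r\<close> by simp
    then show ?thesis using \<open>a \<in> V\<close> \<open>(a,b) \<in> E\<close> \<open>A = b#r\<close> by (simp add: is_path_Cons2)
  qed
qed

lemma Hgap_path_tl:
  assumes h: "Hgap_path k1 k2 Q V E \<delta> (x#xs)" and ne: "xs \<noteq> []"
  shows "Hgap_path k1 k2 Q V E \<delta> xs"
proof -
  have "\<forall>j. Suc j < length xs \<longrightarrow> Hgap_edge k1 k2 Q V E \<delta> (xs ! j) (xs ! Suc j)"
  proof (intro allI impI)
    fix j assume j: "Suc j < length xs"
    then have "Suc (Suc j) < length (x#xs)" by simp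
    then have "Hgap_edge k1 k2 Q V E \<delta> ((x # xs) ! Suc j) ((x # xs) ! Suc (Suc j))"
      using h unfolding Hgap_path_def by blast
    then show "Hgap_edge k1 k2 Q V E \<delta> (xs ! j) (xs ! Suc j)" by simp
  qed
  then show ?thesis using h ne unfolding Hgap_path_def by simp
qed

lemma main:
  assumes "Hgap_path k1 k2 Q V E \<delta> xs"
  shows "\<exists>P q. is_path V E P \<and> hd P = fst (snd (hd xs)) \<and> q 0 = snd (snd (hd xs)) \<and>
    (\<forall>j<length xs. q j < length (spell \<delta> P) \<and> spell \<delta> P ! q j = Q ! fst (xs!j)) \<and>
    (\<forall>j. Suc j < length xs \<longrightarrow> q j < q (Suc j) \<and> q (Suc j) - q j \<le> k2)"
  using assms
proof (induction xs)
  case Nil then show ?case by (simp add: Hgap_path_def)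
next
  case (Cons x xs)
  obtain i u f where x: "x = (i,u,f)" by (cases x) auto
  have vx: "Hgap_vertex Q V \<delta> x" using Cons.prems by (simp add: Hgap_path_def)
  then have vx': "i < length Q" "u \<in> V" "f < length (\<delta> u)" "Q ! i = \<delta> u ! f"
    by (auto simp: Hgap_vertex_def x)
  show ?case
  proof (cases xs)
    case Nil
    show ?thesis
      apply (rule exI[of _ "[u]"], rule exI[of _ "\<lambda>_. f"])
      using vx' Nil x by (simp add: is_path_single spell_def)
  next
    case (Cons y rest)
    obtain i' u' f' where y: "y = (i',u',f')" by (cases y) auto
    have hp: "Hgap_path k1 k2 Q V E \<delta> xs" using Hgap_path_tl[OF Cons.prems] Cons by simp
    from Cons.IH[OF hp] obtain P q where
      P: "is_path V E P" and hdP: "hd P = u'" and q0: "q 0 = f'"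
      and qs: "\<forall>j<length xs. q j < length (spell \<delta> P) \<and> spell \<delta> P ! q j = Q ! fst (xs!j)"
      and qm: "\<forall>j. Suc j < length xs \<longrightarrow> q j < q (Suc j) \<and> q (Suc j) - q j \<le> k2"
      using Cons y by auto
    have ed: "Hgap_edge k1 k2 Q V E \<delta> x y"
    proof -
      have "Suc 0 < length (x#xs)" using Cons by simp
      then have "Hgap_edge k1 k2 Q V E \<delta> ((x#xs) ! 0) ((x#xs) ! Suc 0)"
        using Cons.prems unfolding Hgap_path_def by blast
      then show ?thesis using Cons by simp
    qed
    have Pne: "P \<noteq> []" using P by (simp add: is_path_def)
    show ?thesis
    proof (cases "u = u'")
      case True
      with ed x y have ff: "f < f'" "f' - f \<le> k2" by (auto simp: Hgap_edge_def)
      define q2 where "q2 = (\<lambda>j. if j = 0 then f else q (j - 1))"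
      have sp: "spell \<delta> P = \<delta> u @ spell \<delta> (tl P)" using Pne hdP True
        by (cases P) (auto simp: spell_def)
      show ?thesis
      proof (rule exI[of _ P], rule exI[of _ q2], intro conjI)
        show "is_path V E P" by fact
        show "hd P = fst (snd (hd (x # xs)))" using hdP True x by simp
        show "q2 0 = snd (snd (hd (x # xs)))" using x q2_def by simp
      next
        show "\<forall>j. j < length (x # xs) \<longrightarrow> q2 j < length (spell \<delta> P) \<and> spell \<delta> P ! q2 j = Q ! fst ((x # xs) ! j)"
        proof (intro allI impI)
        fix j assume j: "j < length (x # xs)"
        show "q2 j < length (spell \<delta> P) \<and> spell \<delta> P ! q2 j = Q ! fst ((x # xs) ! j)"
        proof (cases j)
          case 0 then show ?thesis using sp vx' x q2_def by (simp add: nth_append)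
        next
          case (Suc m) then show ?thesis using qs j q2_def by simp
        qed
        qed
      next
        show "\<forall>j. Suc j < length (x # xs) \<longrightarrow> q2 j < q2 (Suc j) \<and> q2 (Suc j) - q2 j \<le> k2"
        proof (intro allI impI)
        fix j assume j: "Suc j < length (x # xs)"
        show "q2 j < q2 (Suc j) \<and> q2 (Suc j) - q2 j \<le> k2"
        proof (cases j)
          case 0 then show ?thesis using ff q0 q2_def by simp
        next
          case (Suc m) then show ?thesis using qm j q2_def by simp
        qed
        qed
      qed
    next
      case False
      with ed x y obtain P0 where P0: "is_path V E P0" "hd P0 = u" "last P0 = u'"
        and L: "0 < int (sum_list (map (\<lambda>w. length (\<delta> w)) (butlast P0))) + int f' - int f"
          "int (sum_list (map (\<lambda>w. length (\<delta> w)) (butlast P0))) + int f' - int f \<le> int k2"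
        by (auto simp: Hgap_edge_def)
      define L where "L = sum_list (map (\<lambda>w. length (\<delta> w)) (butlast P0))"
      have P0ne: "P0 \<noteq> []" using P0 by (simp add: is_path_def)
      obtain B where B: "butlast P0 = u # B"
      proof (cases "butlast P0")
        case Nil
        then have "P0 = [last P0]" using P0ne by (metis append_butlast_last_id append_Nil)
        then show ?thesis using P0 False by (metis last_ConsL list.sel(1))
      next
        case (Cons a B')
        then have "hd P0 = a" using P0ne by (metis append_butlast_last_id hd_append2 list.sel(1) list.simps(3))
        then show ?thesis using Cons P0 that by simp
      qed
      have P0eq: "P0 = (u # B) @ [u']" using B P0 P0ne by (metis append_butlast_last_id)
      have ip1: "is_path V E (u # B)"
      proof -
        have "is_path V E ((u#B) @ [u'])" using P0 P0eq by simp
        then have ip: "is_path V E ((u#B) @ [u'])" .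
        have "\<forall>j. Suc j < length (u#B) \<longrightarrow> ((u#B) ! j, (u#B) ! Suc j) \<in> E"
        proof (intro allI impI)
          fix j assume j: "Suc j < length (u#B)"
          then have "Suc j < length ((u#B) @ [u'])" by simp
          then have "(((u#B) @ [u']) ! j, ((u#B) @ [u']) ! Suc j) \<in> E"
            using ip unfolding is_path_def by blast
          moreover have "((u#B) @ [u']) ! j = (u#B) ! j" using j by (simp only: nth_append) simp
          moreover have "((u#B) @ [u']) ! Suc j = (u#B) ! Suc j" using j by (simp only: nth_append) simp
          ultimately show "((u#B) ! j, (u#B) ! Suc j) \<in> E" by simp
        qed
        then show ?thesis using ip unfolding is_path_def by auto
      qed
      have lastE: "(last (u#B), u') \<in> E"
      proof -
        have ip: "is_path V E ((u#B) @ [u'])" using P0 P0eq by simp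
        have "Suc (length B) < length ((u#B) @ [u'])" by simp
        then have "(((u#B) @ [u']) ! length B, ((u#B) @ [u']) ! Suc (length B)) \<in> E"
          using ip unfolding is_path_def by blast
        moreover have "((u#B) @ [u']) ! length B = last (u#B)"
          by (simp add: nth_append last_conv_nth)
        moreover have "((u#B) @ [u']) ! Suc (length B) = u'"
          by (metis length_Cons nth_append_length)
        ultimately show ?thesis by simp
      qed
      define P2 where "P2 = (u # B) @ P"
      have ip2: "is_path V E P2" unfolding P2_def using is_path_append[OF ip1 P] lastE hdP by simp
      have sp2: "spell \<delta> P2 = \<delta> u @ spell \<delta> B @ spell \<delta> P" by (simp add: P2_def spell_def)
      have Lsp: "L = length (\<delta> u @ spell \<delta> B)" unfolding L_def B spell_def
        by (simp add: length_concat comp_def)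
      define q2 where "q2 = (\<lambda>j. if j = 0 then f else L + q (j - 1))"
      have ff: "f < L + f'" "L + f' - f \<le> k2" using L L_def by auto
      show ?thesis
      proof (rule exI[of _ P2], rule exI[of _ q2], intro conjI)
        show "is_path V E P2" by fact
        show "hd P2 = fst (snd (hd (x # xs)))" using x P2_def by simp
        show "q2 0 = snd (snd (hd (x # xs)))" using x q2_def by simp
      next
        show "\<forall>j. j < length (x # xs) \<longrightarrow> q2 j < length (spell \<delta> P2) \<and> spell \<delta> P2 ! q2 j = Q ! fst ((x # xs) ! j)"
        proof (intro allI impI)
        fix j assume j: "j < length (x # xs)"
        show "q2 j < length (spell \<delta> P2) \<and> spell \<delta> P2 ! q2 j = Q ! fst ((x # xs) ! j)"
        proof (cases j)
          case 0 then show ?thesis using sp2 vx' x q2_def by (simp add: nth_append)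
        next
          case (Suc m)
          have "q m < length (spell \<delta> P) \<and> spell \<delta> P ! q m = Q ! fst (xs ! m)" using qs j Suc by simp
          moreover have "spell \<delta> P2 = (\<delta> u @ spell \<delta> B) @ spell \<delta> P" using sp2 by simp
          ultimately show ?thesis using Suc q2_def Lsp by (simp add: nth_append)
        qed
        qed
      next
        show "\<forall>j. Suc j < length (x # xs) \<longrightarrow> q2 j < q2 (Suc j) \<and> q2 (Suc j) - q2 j \<le> k2"
        proof (intro allI impI)
        fix j assume j: "Suc j < length (x # xs)"
        show "q2 j < q2 (Suc j) \<and> q2 (Suc j) - q2 j \<le> k2"
        proof (cases j)
          case 0 then show ?thesis using ff q0 q2_def by simp
        next
          case (Suc m) then show ?thesis using qm j q2_def by simp
        qed
        qed
      qed
    qed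
  qed
qed

theorem lemma6:
  fixes Q :: "'a list" and V :: "'v set" and E :: "('v \<times> 'v) set" and \<delta> :: "'v \<Rightarrow> 'a list"
    and k1 k2 :: nat and xs :: "(nat \<times> 'v \<times> nat) list"
  assumes "pangenome_graph V E \<delta>"
    and "k1 > 0" and "k2 > 0"
    and "Hgap_path k1 k2 Q V E \<delta> xs"
  shows "gap_common_subseq k1 k2 Q V E \<delta> (map (\<lambda>(i, u, f). Q ! i) xs)"
proof -
  from main[OF assms(4)] obtain P q where
      P: "is_path V E P"
      and qs: "\<forall>j<length xs. q j < length (spell \<delta> P) \<and> spell \<delta> P ! q j = Q ! fst (xs!j)"
      and qm: "\<forall>j. Suc j < length xs \<longrightarrow> q j < q (Suc j) \<and> q (Suc j) - q j \<le> k2"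
    by blast
  define p where "p = (\<lambda>j. fst (xs ! j))"
  have Sj: "\<And>j. j < length xs \<Longrightarrow> map (\<lambda>(i, u, f). Q ! i) xs ! j = Q ! p j"
    by (simp add: p_def split: prod.splits)
  have pv: "\<And>j. j < length xs \<Longrightarrow> p j < length Q"
  proof -
    fix j assume "j < length xs"
    then have "Hgap_vertex Q V \<delta> (xs ! j)" using assms(4) by (simp add: Hgap_path_def)
    then show "p j < length Q" by (cases "xs ! j") (auto simp: Hgap_vertex_def p_def)
  qed
  have pm: "\<And>j. Suc j < length xs \<Longrightarrow> p j < p (Suc j) \<and> p (Suc j) - p j \<le> k1"
  proof -
    fix j assume "Suc j < length xs"
    then have "Hgap_edge k1 k2 Q V E \<delta> (xs ! j) (xs ! Suc j)" using assms(4) by (simp add: Hgap_path_def)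
    then show "p j < p (Suc j) \<and> p (Suc j) - p j \<le> k1"
      by (cases "xs ! j"; cases "xs ! Suc j") (auto simp: Hgap_edge_def p_def)
  qed
  show ?thesis unfolding gap_common_subseq_def
  proof (rule exI[of _ P], rule exI[of _ p], rule exI[of _ q], intro conjI allI impI)
    show "is_path V E P" by fact
  next
    fix j assume "j < length (map (\<lambda>(i, u, f). Q ! i) xs)"
    then show "p j < length Q" "q j < length (spell \<delta> P)"
      "Q ! p j = map (\<lambda>(i, u, f). Q ! i) xs ! j" "spell \<delta> P ! q j = map (\<lambda>(i, u, f). Q ! i) xs ! j"
      using pv qs Sj p_def by auto
  next
    fix j assume "Suc j < length (map (\<lambda>(i, u, f). Q ! i) xs)"
    then show "p j < p (Suc j)" "q j < q (Suc j)" using pm qm by auto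
  next
    fix j assume j: "1 \<le> j \<and> j < length (map (\<lambda>(i, u, f). Q ! i) xs)"
    then obtain m where m: "j = Suc m" by (cases j) auto
    show "p j - p (j - 1) \<le> k1" "q j - q (j - 1) \<le> k2" using pm qm j m by auto
  qed
qed

end
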